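(* If $\mathcal C\subseteq2^{[n]}$ is a stable hyperplane code, then $\mathcal C$ can be realized by a stable pair $(\mathcal H,\mathcal P)$, i.e. $\mathcal C=\mathrm{code}(\mathcal H,\mathcal P)$, where $\mathcal P=\bigcap_{j\in[m]}B_j^+$ is an open polytope, given as the intersection of open half-spaces bounded by hyperplanes $\mathcal B=\{B_1,\dots,B_m\}$, such that the arrangement $\mathcal H\cup\mathcal B$ has generic intersections in $\mathbb R^d$.
   Context: An oriented affine hyperplane is $H=\{x\in\mathbb R^d:w\cdot x-h=0\}$ with $w\neq0$, and $H^+=\{w\cdot x-h>0\}$. For $\mathcal H=\{H_1,\dots,H_n\}$ and open convex $X$, $\mathrm{code}(\mathcal H,X)$ is the set of $\sigma\subseteq[n]$ with $\bigl(\bigcap_{i\in\sigma}(H_i^+\cap X)\bigr)\setminus\bigcup_{j\notin\sigma}H_j^+\ne\emptyset$ (for $\sigma=\emptyset$: $X\setminus\bigcup_iH_i^+\ne\emptyset$). $(\mathcal H,X)$ is stable if $X$ is open convex and for every $\sigma\subseteq[n]$ with $X\cap\bigcap_{i\in\sigma}H_i\neq\emptyset$, $\dim\bigcap_{i\in\sigma}H_i=d-|\sigma|$; a stable hyperplane code is the code of a stable pair. A finite set of hyperplanes $\mathcal A$ has generic intersections in $\mathbb R^d$ if every subfamily with nonempty intersection has intersection of dimension $d$ minus the size of the subfamily. *)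

theory Defs
  imports "HOL-Analysis.Analysis"
begin

text \<open>An oriented affine hyperplane is given by a pair (w, h) with w \<noteq> 0;
  H = {x. w \<bullet> x - h = 0}, H+ = {x. w \<bullet> x - h > 0}.
  The ambient space R^d is an arbitrary euclidean_space type 'a, d = DIM('a).\<close>

definition valid_hyp :: "'a::euclidean_space \<times> real \<Rightarrow> bool" where
  "valid_hyp H \<longleftrightarrow> fst H \<noteq> 0"

definition hyp :: "'a::euclidean_space \<times> real \<Rightarrow> 'a set" where
  "hyp H = {x. fst H \<bullet> x - snd H = 0}"

definition hpos :: "'a::euclidean_space \<times> real \<Rightarrow> 'a set" where
  "hpos H = {x. fst H \<bullet> x - snd H > 0}"

definition hcode :: "nat \<Rightarrow> (nat \<Rightarrow> 'a::euclidean_space \<times> real) \<Rightarrow> 'a set \<Rightarrow> nat set set" where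
  "hcode n H X = {\<sigma>. \<sigma> \<subseteq> {1..n} \<and>
      (X \<inter> (\<Inter>i\<in>\<sigma>. hpos (H i))) - (\<Union>j\<in>{1..n} - \<sigma>. hpos (H j)) \<noteq> {}}"

definition stable_pair :: "nat \<Rightarrow> (nat \<Rightarrow> 'a::euclidean_space \<times> real) \<Rightarrow> 'a set \<Rightarrow> bool" where
  "stable_pair n H X \<longleftrightarrow> (\<forall>i\<in>{1..n}. valid_hyp (H i)) \<and> open X \<and> convex X \<and>
     (\<forall>\<sigma>. \<sigma> \<subseteq> {1..n} \<longrightarrow> X \<inter> (\<Inter>i\<in>\<sigma>. hyp (H i)) \<noteq> {} \<longrightarrow>
        aff_dim (\<Inter>i\<in>\<sigma>. hyp (H i)) = int DIM('a) - int (card \<sigma>))"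

definition generic_intersections :: "('i \<Rightarrow> 'a::euclidean_space \<times> real) \<Rightarrow> 'i set \<Rightarrow> bool" where
  "generic_intersections A I \<longleftrightarrow> (\<forall>S. S \<subseteq> I \<longrightarrow> (\<Inter>i\<in>S. hyp (A i)) \<noteq> {} \<longrightarrow>
        aff_dim (\<Inter>i\<in>S. hyp (A i)) = int DIM('a) - int (card S))"

definition join_fam :: "(nat \<Rightarrow> 'b) \<Rightarrow> (nat \<Rightarrow> 'b) \<Rightarrow> nat + nat \<Rightarrow> 'b" where
  "join_fam H B = case_sum H B"

end

theory Submission
  imports Defs
begin

lemma span_sum_repr:
  fixes f :: "'i \<Rightarrow> 'a::euclidean_space"
  assumes "finite T" "y \<in> span (f ` T)"
  shows "\<exists>a. y = (\<Sum>i\<in>T. a i *\<^sub>R f i)"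
  using assms
proof (induction T arbitrary: y rule: finite_induct)
  case empty
  then show ?case by simp
next
  case (insert k T)
  from insert.prems have "y \<in> span (insert (f k) (f ` T))" by simp
  then obtain t where "y - t *\<^sub>R f k \<in> span (f ` T)"
    by (auto simp: span_insert)
  from insert.IH[OF this] obtain a where a: "y - t *\<^sub>R f k = (\<Sum>i\<in>T. a i *\<^sub>R f i)" by blast
  have "(\<Sum>i\<in>T. (a(k:=t)) i *\<^sub>R f i) = (\<Sum>i\<in>T. a i *\<^sub>R f i)"
    using insert.hyps by (intro sum.cong) auto
  then have "y = (\<Sum>i\<in>insert k T. (a(k:=t)) i *\<^sub>R f i)"
    using insert.hyps a by (simp add: algebra_simps)
  then show ?case by blast
qed

lemma indep_of_chain:
  fixes f :: "nat \<Rightarrow> 'a::euclidean_space"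
  assumes "finite S" "\<forall>k\<in>S. f k \<notin> span (f ` {i\<in>S. i<k})"
  shows "inj_on f S \<and> independent (f ` S)"
  using assms
proof (induction S rule: finite_linorder_max_induct)
  case empty
  then show ?case by (simp add: independent_empty)
next
  case (insert b A)
  have eqA: "{i\<in>insert b A. i<b} = A" using insert.hyps by auto
  have IHp: "\<forall>k\<in>A. f k \<notin> span (f ` {i\<in>A. i<k})"
  proof
    fix k assume k: "k \<in> A"
    have "{i\<in>insert b A. i<k} = {i\<in>A. i<k}" using insert.hyps k by auto
    moreover have "f k \<notin> span (f ` {i\<in>insert b A. i<k})"
      by (rule bspec[OF insert.prems]) (use k in blast)
    ultimately show "f k \<notin> span (f ` {i\<in>A. i<k})" by simp
  qed
  from insert.IH[OF IHp] have ih: "inj_on f A" "independent (f ` A)" by auto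
  have "f b \<notin> span (f ` {i\<in>insert b A. i<b})"
    by (rule bspec[OF insert.prems]) blast
  then have nb: "f b \<notin> span (f ` A)" using eqA by simp
  have "f b \<notin> f ` A"
  proof
    assume "f b \<in> f ` A"
    then have "f b \<in> span (f ` A)" by (rule span_base)
    with nb show False by contradiction
  qed
  then have "inj_on f (insert b A)" using ih by (simp add: inj_on_insert) blast
  moreover have "independent (f ` insert b A)"
    using ih nb by (simp add: independent_insertI)
  ultimately show ?case by blast
qed

lemma orth_span:
  fixes V :: "'a::euclidean_space set"
  assumes "\<forall>v\<in>V. v \<bullet> y = 0" "x \<in> span V"
  shows "x \<bullet> y = 0"
  using assms(2)
proof (induction rule: span_induct)
  case base
  show ?case using subspace_hyperplane2[of y] .
next
  case (step x) then show ?case using assms(1) by simp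
qed

lemma dim_comp:
  fixes V :: "'a::euclidean_space set"
  shows "dim {y. \<forall>v\<in>V. v \<bullet> y = 0} = DIM('a) - dim V"
proof -
  have e: "{y \<in> UNIV. \<forall>x \<in> span V. orthogonal x y} = {y. \<forall>v\<in>V. v \<bullet> y = 0}"
    using orth_span by (auto simp: orthogonal_def intro: span_base)
  have "dim {y \<in> UNIV. \<forall>x \<in> span V. orthogonal x y} + dim (span V) = dim (UNIV::'a set)"
    by (rule dim_subspace_orthogonal_to_vectors) auto
  then show ?thesis using e by simp
qed

lemma inter_hyp_eq:
  "(\<Inter>i\<in>S. hyp (G i)) = {y. \<forall>i\<in>S. fst (G i) \<bullet> y = snd (G i)}"
  by (auto simp: hyp_def)

lemma aff_dim_hyps:
  fixes G :: "'i \<Rightarrow> 'a::euclidean_space \<times> real"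
  assumes "x \<in> (\<Inter>i\<in>S. hyp (G i))"
  shows "aff_dim (\<Inter>i\<in>S. hyp (G i)) = int DIM('a) - int (dim ((\<lambda>i. fst (G i)) ` S))"
proof -
  let ?V = "(\<lambda>i. fst (G i)) ` S"
  let ?L = "{y. \<forall>v\<in>?V. v \<bullet> y = 0}"
  have xs: "\<forall>i\<in>S. fst (G i) \<bullet> x = snd (G i)" using assms by (auto simp: hyp_def)
  have "(\<Inter>i\<in>S. hyp (G i)) = (+) x ` ?L"
  proof (rule set_eqI, rule iffI)
    fix y assume "y \<in> (\<Inter>i\<in>S. hyp (G i))"
    then have "y - x \<in> ?L" using xs by (auto simp: hyp_def inner_diff_right)
    then show "y \<in> (+) x ` ?L" by (intro image_eqI[where x="y-x"]) simp_all
  next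
    fix y assume "y \<in> (+) x ` ?L"
    then show "y \<in> (\<Inter>i\<in>S. hyp (G i))" using xs by (auto simp: hyp_def inner_add_right)
  qed
  then have "aff_dim (\<Inter>i\<in>S. hyp (G i)) = aff_dim ?L" by (simp add: aff_dim_translation_eq)
  also have "\<dots> = int (dim ?L)"
    by (rule aff_dim_subspace) (auto simp: subspace_def inner_add_right)
  also have "\<dots> = int DIM('a) - int (dim ?V)"
    using dim_comp[of ?V] dim_subset_UNIV[of ?V] by simp
  finally show ?thesis .
qed

lemma dim_card_iff:
  fixes f :: "'i \<Rightarrow> 'a::euclidean_space"
  assumes "finite S"
  shows "dim (f ` S) = card S \<longleftrightarrow> inj_on f S \<and> independent (f ` S)"
proof
  assume d: "dim (f ` S) = card S"
  have c1: "dim (f ` S) \<le> card (f ` S)" using assms by (intro dim_le_card) (auto intro: span_base)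
  have c2: "card (f ` S) \<le> card S" using assms by (rule card_image_le)
  then have "card (f ` S) = card S" using c1 d by simp
  then have "inj_on f S" using assms by (intro eq_card_imp_inj_on)
  moreover have "independent (f ` S)"
    using c1 c2 d assms by (intro card_le_dim_spanning[of _ "f ` S"]) (auto intro: span_base)
  ultimately show "inj_on f S \<and> independent (f ` S)" by blast
next
  assume "inj_on f S \<and> independent (f ` S)"
  then show "dim (f ` S) = card S" by (simp add: dim_eq_card_independent card_image)
qed

lemma solve_indep:
  fixes f :: "'i \<Rightarrow> 'a::euclidean_space"
  assumes "finite S" "inj_on f S" "independent (f ` S)"
  shows "\<exists>v. \<forall>k\<in>S. f k \<bullet> v = t k"
  using assms
proof (induction S rule: finite_induct)
  case empty then show ?case by simp
next
  case (insert k S)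
  have nin: "f k \<notin> f ` S" using insert by auto
  have ind: "independent (f ` S)" and nsp: "f k \<notin> span (f ` S)"
    using insert.prems(2) nin by (auto simp: independent_insert)
  have "inj_on f S" using insert.prems by auto
  from insert.IH[OF this ind] obtain v where v: "\<forall>i\<in>S. f i \<bullet> v = t i" by blast
  obtain y z where y: "y \<in> span (f ` S)" and z: "\<And>w. w \<in> span (f ` S) \<Longrightarrow> orthogonal z w"
    and e: "f k = y + z"
    using orthogonal_subspace_decomp_exists by metis
  have "z \<noteq> 0" using nsp y e by auto
  have yz: "y \<bullet> z = 0" using z[OF y] by (simp add: orthogonal_def inner_commute)
  have "f k \<bullet> z = y \<bullet> z + z \<bullet> z" using e by (simp add: inner_add_left)
  then have "f k \<bullet> z = z \<bullet> z" using yz by simp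
  then have nz: "f k \<bullet> z \<noteq> 0" using \<open>z \<noteq> 0\<close> by simp
  define s where "s = (t k - f k \<bullet> v) / (f k \<bullet> z)"
  have "\<forall>i\<in>insert k S. f i \<bullet> (v + s *\<^sub>R z) = t i"
  proof
    fix i assume "i \<in> insert k S"
    then consider "i = k" | "i \<in> S" by blast
    then show "f i \<bullet> (v + s *\<^sub>R z) = t i"
    proof cases
      case 1 then show ?thesis using nz by (simp add: s_def inner_add_right)
    next
      case 2
      have "orthogonal z (f i)" using z[of "f i"] 2 by (auto intro: span_base)
      then show ?thesis using v 2 by (simp add: inner_add_right orthogonal_def inner_commute)
    qed
  qed
  then show ?case by blast
qed

lemma perturb_point:
  fixes H :: "nat \<Rightarrow> 'a::euclidean_space \<times> real"
  assumes st: "stable_pair n H X" and q: "q \<in> X" and A: "A \<subseteq> {1..n}"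
    and ge: "\<forall>i\<in>A. snd (H i) \<le> fst (H i) \<bullet> q"
    and le: "\<forall>j\<in>{1..n}-A. fst (H j) \<bullet> q \<le> snd (H j)"
  shows "\<exists>p\<in>X. (\<forall>i\<in>A. snd (H i) < fst (H i) \<bullet> p) \<and> (\<forall>j\<in>{1..n}-A. fst (H j) \<bullet> p < snd (H j))"
proof -
  define Z where "Z = {k\<in>{1..n}. fst (H k) \<bullet> q = snd (H k)}"
  have fZ: "finite Z" unfolding Z_def by simp
  have qZ: "q \<in> (\<Inter>i\<in>Z. hyp (H i))" unfolding Z_def hyp_def by auto
  have "Z \<subseteq> {1..n}" unfolding Z_def by auto
  moreover have "X \<inter> (\<Inter>i\<in>Z. hyp (H i)) \<noteq> {}" using q qZ by blast
  ultimately have ad: "aff_dim (\<Inter>i\<in>Z. hyp (H i)) = int DIM('a) - int (card Z)"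
    using st unfolding stable_pair_def by blast
  have "dim ((\<lambda>i. fst (H i)) ` Z) = card Z"
    using aff_dim_hyps[OF qZ] ad by simp
  then have ii: "inj_on (\<lambda>i. fst (H i)) Z \<and> independent ((\<lambda>i. fst (H i)) ` Z)"
    using dim_card_iff[OF fZ] by blast
  obtain v where v: "\<forall>k\<in>Z. fst (H k) \<bullet> v = (if k \<in> A then 1 else -1)"
    using solve_indep[OF fZ, of "\<lambda>i. fst (H i)" "\<lambda>k. if k \<in> A then 1 else -1"] ii by blast
  have lim: "((\<lambda>t. q + t *\<^sub>R v) \<longlongrightarrow> q) (at_right (0::real))"
  proof -
    have "((\<lambda>t. q + t *\<^sub>R v) \<longlongrightarrow> q + (0::real) *\<^sub>R v) (at_right (0::real))"
      by (intro tendsto_intros)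
    then show ?thesis by simp
  qed
  have evX: "eventually (\<lambda>t. q + t *\<^sub>R v \<in> X) (at_right (0::real))"
    using topological_tendstoD[OF lim] st q unfolding stable_pair_def by blast
  have evK: "eventually (\<lambda>t. \<forall>k\<in>{1..n}-Z.
      (snd (H k) < fst (H k) \<bullet> q \<longrightarrow> snd (H k) < fst (H k) \<bullet> (q + t *\<^sub>R v)) \<and>
      (fst (H k) \<bullet> q < snd (H k) \<longrightarrow> fst (H k) \<bullet> (q + t *\<^sub>R v) < snd (H k))) (at_right (0::real))"
  proof (rule eventually_ball_finite)
    show "finite ({1..n}-Z)" by simp
  next
    show "\<forall>k\<in>{1..n}-Z. eventually (\<lambda>t.
      (snd (H k) < fst (H k) \<bullet> q \<longrightarrow> snd (H k) < fst (H k) \<bullet> (q + t *\<^sub>R v)) \<and>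
      (fst (H k) \<bullet> q < snd (H k) \<longrightarrow> fst (H k) \<bullet> (q + t *\<^sub>R v) < snd (H k))) (at_right (0::real))"
    proof
      fix k assume "k \<in> {1..n}-Z"
      have l2: "((\<lambda>t. fst (H k) \<bullet> (q + t *\<^sub>R v)) \<longlongrightarrow> fst (H k) \<bullet> q) (at_right (0::real))"
        by (intro tendsto_inner tendsto_const lim)
      show "eventually (\<lambda>t.
      (snd (H k) < fst (H k) \<bullet> q \<longrightarrow> snd (H k) < fst (H k) \<bullet> (q + t *\<^sub>R v)) \<and>
      (fst (H k) \<bullet> q < snd (H k) \<longrightarrow> fst (H k) \<bullet> (q + t *\<^sub>R v) < snd (H k))) (at_right (0::real))"
      proof (intro eventually_conj)
        show "eventually (\<lambda>t. snd (H k) < fst (H k) \<bullet> q \<longrightarrow> snd (H k) < fst (H k) \<bullet> (q + t *\<^sub>R v)) (at_right (0::real))"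
          using order_tendstoD(1)[OF l2, of "snd (H k)"] by (cases "snd (H k) < fst (H k) \<bullet> q") auto
        show "eventually (\<lambda>t. fst (H k) \<bullet> q < snd (H k) \<longrightarrow> fst (H k) \<bullet> (q + t *\<^sub>R v) < snd (H k)) (at_right (0::real))"
          using order_tendstoD(2)[OF l2, of "snd (H k)"] by (cases "fst (H k) \<bullet> q < snd (H k)") auto
      qed
    qed
  qed
  have "eventually (\<lambda>t. 0 < t \<and> q + t *\<^sub>R v \<in> X \<and> (\<forall>k\<in>{1..n}-Z.
      (snd (H k) < fst (H k) \<bullet> q \<longrightarrow> snd (H k) < fst (H k) \<bullet> (q + t *\<^sub>R v)) \<and>
      (fst (H k) \<bullet> q < snd (H k) \<longrightarrow> fst (H k) \<bullet> (q + t *\<^sub>R v) < snd (H k)))) (at_right (0::real))"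
    using eventually_at_right_less[of 0] evX evK by (intro eventually_conj) auto
  then obtain t where t: "0 < t" "q + t *\<^sub>R v \<in> X" and
    tk: "\<forall>k\<in>{1..n}-Z.
      (snd (H k) < fst (H k) \<bullet> q \<longrightarrow> snd (H k) < fst (H k) \<bullet> (q + t *\<^sub>R v)) \<and>
      (fst (H k) \<bullet> q < snd (H k) \<longrightarrow> fst (H k) \<bullet> (q + t *\<^sub>R v) < snd (H k))"
    using eventually_happens'[OF trivial_limit_at_right_real] by blast
  have inZ: "fst (H k) \<bullet> (q + t *\<^sub>R v) = snd (H k) + t * (if k \<in> A then 1 else -1)" if "k \<in> Z" for k
    using that v Z_def by (simp add: inner_add_right)
  show ?thesis
  proof (intro bexI[OF _ t(2)] conjI ballI)
    fix i assume i: "i \<in> A"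
    show "snd (H i) < fst (H i) \<bullet> (q + t *\<^sub>R v)"
    proof (cases "i \<in> Z")
      case True then show ?thesis using inZ[OF True] i t(1) by simp
    next
      case False
      then have "snd (H i) < fst (H i) \<bullet> q" using ge i A unfolding Z_def by force
      then show ?thesis using tk False i A by blast
    qed
  next
    fix j assume j: "j \<in> {1..n}-A"
    show "fst (H j) \<bullet> (q + t *\<^sub>R v) < snd (H j)"
    proof (cases "j \<in> Z")
      case True then show ?thesis using inZ[OF True] j t(1) by simp
    next
      case False
      then have "fst (H j) \<bullet> q < snd (H j)" using le j unfolding Z_def by force
      then show ?thesis using tk False j by blast
    qed
  qed
qed

lemma weak_in_code:
  fixes H :: "nat \<Rightarrow> 'a::euclidean_space \<times> real"
  assumes st: "stable_pair n H X" and q: "q \<in> X" and A: "A \<subseteq> {1..n}"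
    and ge: "\<forall>i\<in>A. snd (H i) \<le> fst (H i) \<bullet> q"
    and le: "\<forall>j\<in>{1..n}-A. fst (H j) \<bullet> q \<le> snd (H j)"
  shows "A \<in> hcode n H X"
proof -
  obtain p where p: "p \<in> X" "\<forall>i\<in>A. snd (H i) < fst (H i) \<bullet> p" "\<forall>j\<in>{1..n}-A. fst (H j) \<bullet> p < snd (H j)"
    using perturb_point[OF assms] by blast
  have p1: "p \<in> X \<inter> (\<Inter>i\<in>A. hpos (H i))" using p by (auto simp: hpos_def)
  have p2: "p \<notin> (\<Union>j\<in>{1..n} - A. hpos (H j))"
  proof
    assume "p \<in> (\<Union>j\<in>{1..n} - A. hpos (H j))"
    then obtain j where j: "j \<in> {1..n} - A" "p \<in> hpos (H j)" by blast
    have "fst (H j) \<bullet> p < snd (H j)" using bspec[OF p(3) j(1)] .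
    then show False using j(2) by (simp add: hpos_def)
  qed
  have "p \<in> (X \<inter> (\<Inter>i\<in>A. hpos (H i))) - (\<Union>j\<in>{1..n} - A. hpos (H j))"
    using p1 p2 by blast
  then show ?thesis using A unfolding hcode_def by blast
qed
lemma arith1:
  fixes r a s b d e :: real
  shows "r \<le> \<bar>a - s\<bar> \<Longrightarrow> \<bar>b - a\<bar> < r/2 \<Longrightarrow> \<bar>d\<bar> < e \<Longrightarrow> e \<le> r/2 \<Longrightarrow> a < s \<Longrightarrow> s + d < b \<Longrightarrow> False"
  by arith

lemma arith2:
  fixes r a s b d e :: real
  shows "r \<le> \<bar>a - s\<bar> \<Longrightarrow> \<bar>b - a\<bar> < r/2 \<Longrightarrow> \<bar>d\<bar> < e \<Longrightarrow> e \<le> r/2 \<Longrightarrow> s < a \<Longrightarrow> \<not> (s + d < b) \<Longrightarrow> False"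
  by arith

lemma compact_code:
  fixes H :: "nat \<Rightarrow> 'a::euclidean_space \<times> real"
  assumes st: "stable_pair n H X" and K: "compact K" "K \<subseteq> X"
  shows "\<exists>\<epsilon>>0. \<forall>\<delta>. (\<forall>k\<in>{1..n}. \<bar>\<delta> k\<bar> < \<epsilon>) \<longrightarrow>
           (\<forall>y\<in>K. {k\<in>{1..n}. snd (H k) + \<delta> k < fst (H k) \<bullet> y} \<in> hcode n H X)"
proof -
  define r where "r q = Min (insert 1 ((\<lambda>k. \<bar>fst (H k) \<bullet> q - snd (H k)\<bar>) ` {k\<in>{1..n}. fst (H k) \<bullet> q \<noteq> snd (H k)}))" for q
  have rpos: "0 < r q" for q unfolding r_def by (subst Min_gr_iff) auto
  have rle: "r q \<le> \<bar>fst (H k) \<bullet> q - snd (H k)\<bar>" if "k \<in> {1..n}" "fst (H k) \<bullet> q \<noteq> snd (H k)" for q k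
    unfolding r_def using that by (intro Min_le) auto
  define U where "U q = (\<Inter>k\<in>{k\<in>{1..n}. fst (H k) \<bullet> q \<noteq> snd (H k)}. {y. \<bar>fst (H k) \<bullet> y - fst (H k) \<bullet> q\<bar> < r q / 2})" for q
  have Uo: "open (U q)" for q unfolding U_def
    by (rule open_INT) (auto intro!: open_Collect_less continuous_intros)
  have Uq: "q \<in> U q" for q unfolding U_def using rpos[of q] by auto
  have "K \<subseteq> (\<Union>q\<in>K. U q)" using Uq by blast
  then obtain T where T: "T \<subseteq> K" "finite T" "K \<subseteq> (\<Union>q\<in>T. U q)"
    using compactE_image[OF K(1), of K U] Uo by metis
  define \<epsilon> where "\<epsilon> = Min (insert 1 (r ` T)) / 2"
  have epos: "0 < \<epsilon>" unfolding \<epsilon>_def using rpos T(2) by (simp add: Min_gr_iff)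
  have ele: "\<epsilon> \<le> r q / 2" if "q \<in> T" for q
  proof -
    have "Min (insert 1 (r ` T)) \<le> r q" using that T(2) by (intro Min_le) auto
    then show ?thesis unfolding \<epsilon>_def by simp
  qed
  show ?thesis
  proof (intro exI[of _ \<epsilon>] conjI epos allI impI ballI)
    fix \<delta> y assume \<delta>: "\<forall>k\<in>{1..n}. \<bar>\<delta> k\<bar> < \<epsilon>" and y: "y \<in> K"
    then obtain q where q: "q \<in> T" "y \<in> U q" using T(3) by blast
    have qX: "q \<in> X" using q T K by blast
    have close: "\<bar>fst (H k) \<bullet> y - fst (H k) \<bullet> q\<bar> < r q / 2" if "k\<in>{1..n}" "fst (H k) \<bullet> q \<noteq> snd (H k)" for k
      using q(2) that unfolding U_def by blast
    show "{k\<in>{1..n}. snd (H k) + \<delta> k < fst (H k) \<bullet> y} \<in> hcode n H X"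
    proof (rule weak_in_code[OF st qX])
      show "{k\<in>{1..n}. snd (H k) + \<delta> k < fst (H k) \<bullet> y} \<subseteq> {1..n}" by auto
      show "\<forall>i\<in>{k\<in>{1..n}. snd (H k) + \<delta> k < fst (H k) \<bullet> y}. snd (H i) \<le> fst (H i) \<bullet> q"
      proof
        fix i assume i: "i \<in> {k\<in>{1..n}. snd (H k) + \<delta> k < fst (H k) \<bullet> y}"
        show "snd (H i) \<le> fst (H i) \<bullet> q"
        proof (rule ccontr)
          assume "\<not> ?thesis"
          then have ne: "fst (H i) \<bullet> q < snd (H i)" by simp
          have i1: "i \<in> {1..n}" and i2: "snd (H i) + \<delta> i < fst (H i) \<bullet> y" using i by auto
          have ne2: "fst (H i) \<bullet> q \<noteq> snd (H i)" using ne by simp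
          show False
            using arith1[OF rle[OF i1 ne2] close[OF i1 ne2] \<delta>[rule_format, OF i1] ele[OF q(1)] ne i2] .
        qed
      qed
      show "\<forall>j\<in>{1..n} - {k\<in>{1..n}. snd (H k) + \<delta> k < fst (H k) \<bullet> y}. fst (H j) \<bullet> q \<le> snd (H j)"
      proof
        fix j assume j: "j \<in> {1..n} - {k\<in>{1..n}. snd (H k) + \<delta> k < fst (H k) \<bullet> y}"
        show "fst (H j) \<bullet> q \<le> snd (H j)"
        proof (rule ccontr)
          assume "\<not> ?thesis"
          then have ne: "snd (H j) < fst (H j) \<bullet> q" by simp
          have j1: "j \<in> {1..n}" and j2: "\<not> (snd (H j) + \<delta> j < fst (H j) \<bullet> y)" using j by auto
          have ne2: "fst (H j) \<bullet> q \<noteq> snd (H j)" using ne by simp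
          show False
            using arith2[OF rle[OF j1 ne2] close[OF j1 ne2] \<delta>[rule_format, OF j1] ele[OF q(1)] ne j2] .
        qed
      qed
    qed
  qed
qed

lemma seq_choice:
  fixes F :: "nat \<Rightarrow> (nat \<Rightarrow> real) \<Rightarrow> real set" and lo hi :: "nat \<Rightarrow> real"
  assumes lh: "\<forall>k. lo k < hi k" and fin: "\<forall>k c. finite (F k c)"
    and dep: "\<forall>k c c'. (\<forall>i<k. c i = c' i) \<longrightarrow> F k c = F k c'"
  shows "\<exists>c. \<forall>k<M. lo k < c k \<and> c k < hi k \<and> c k \<notin> F k c"
proof (induction M)
  case 0 show ?case by simp
next
  case (Suc M)
  then obtain c where c: "\<forall>k<M. lo k < c k \<and> c k < hi k \<and> c k \<notin> F k c" by blast
  have "infinite ({lo M<..<hi M} - F M c)" using lh fin by (simp add: Diff_infinite_finite)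
  then obtain y where y: "y \<in> {lo M<..<hi M} - F M c" using infinite_imp_nonempty by blast
  define c' where "c' = c(M := y)"
  have "\<forall>k<Suc M. lo k < c' k \<and> c' k < hi k \<and> c' k \<notin> F k c'"
  proof (intro allI impI)
    fix k assume "k < Suc M"
    then consider "k < M" | "k = M" by linarith
    then show "lo k < c' k \<and> c' k < hi k \<and> c' k \<notin> F k c'"
    proof cases
      case 1
      have "\<forall>i<k. c' i = c i" using 1 unfolding c'_def by auto
      then have "F k c' = F k c" using dep by blast
      then show ?thesis using c 1 unfolding c'_def by auto
    next
      case 2
      have "\<forall>i<k. c' i = c i" using 2 unfolding c'_def by auto
      then have "F k c' = F k c" using dep by blast
      then show ?thesis using y 2 unfolding c'_def by auto
    qed
  qed
  then show ?case by blast
qed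

lemma generic_choice:
  fixes N :: "nat \<Rightarrow> 'a::euclidean_space" and lo hi :: "nat \<Rightarrow> real"
  assumes lh: "\<forall>k. lo k < hi k"
  shows "\<exists>c. (\<forall>k<M. lo k < c k \<and> c k < hi k) \<and> generic_intersections (\<lambda>k. (N k, c k)) {..<M}"
proof -
  define coef where "coef S k = (SOME a. N k = (\<Sum>i\<in>S-{k}. a i *\<^sub>R N i))" for S k
  define F where "F k c = (\<lambda>S. \<Sum>i\<in>S-{k}. coef S k i * c i) ` {S. S \<subseteq> {..k} \<and> k \<in> S \<and> N k \<in> span (N ` (S-{k}))}"
    for k and c :: "nat \<Rightarrow> real"
  have fin: "\<forall>k c. finite (F k c)"
  proof (intro allI)
    fix k c
    have "{S. S \<subseteq> {..k} \<and> k \<in> S \<and> N k \<in> span (N ` (S-{k}))} \<subseteq> Pow {..k}" by auto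
    then have "finite {S. S \<subseteq> {..k} \<and> k \<in> S \<and> N k \<in> span (N ` (S-{k}))}"
      by (rule finite_subset) simp
    then show "finite (F k c)" unfolding F_def by simp
  qed
  have dep: "\<forall>k c c'. (\<forall>i<k. c i = c' i) \<longrightarrow> F k c = F k c'"
  proof (intro allI impI)
    fix k and c c' :: "nat \<Rightarrow> real" assume cc: "\<forall>i<k. c i = c' i"
    show "F k c = F k c'" unfolding F_def
    proof (rule image_cong[OF refl])
      fix S assume "S \<in> {S. S \<subseteq> {..k} \<and> k \<in> S \<and> N k \<in> span (N ` (S-{k}))}"
      then have "S - {k} \<subseteq> {..<k}" by auto
      then show "(\<Sum>i\<in>S-{k}. coef S k i * c i) = (\<Sum>i\<in>S-{k}. coef S k i * c' i)"
        using cc by (intro sum.cong) auto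
    qed
  qed
  obtain c where c: "\<forall>k<M. lo k < c k \<and> c k < hi k \<and> c k \<notin> F k c"
    using seq_choice[OF lh fin dep] by blast
  have "generic_intersections (\<lambda>k. (N k, c k)) {..<M}"
    unfolding generic_intersections_def
  proof (intro allI impI)
    fix S assume S: "S \<subseteq> {..<M}" and ne: "(\<Inter>i\<in>S. hyp (N i, c i)) \<noteq> {}"
    then obtain x where x: "x \<in> (\<Inter>i\<in>S. hyp (N i, c i))" by blast
    have xe: "\<forall>i\<in>S. N i \<bullet> x = c i" using x by (auto simp: hyp_def)
    have fS: "finite S" using S finite_subset by blast
    have chain: "\<forall>k\<in>S. N k \<notin> span (N ` {i\<in>S. i<k})"
    proof (intro ballI notI)
      fix k assume k: "k \<in> S" and sp: "N k \<in> span (N ` {i\<in>S. i<k})"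
      define S' where "S' = {i\<in>S. i \<le> k}"
      have S'k: "S' - {k} = {i\<in>S. i<k}" unfolding S'_def by auto
      have fS': "finite (S' - {k})" using fS S'k by simp
      have sp': "N k \<in> span (N ` (S' - {k}))" using sp S'k by simp
      have ex: "\<exists>a. N k = (\<Sum>i\<in>S'-{k}. a i *\<^sub>R N i)" using span_sum_repr[OF fS' sp'] .
      have co: "N k = (\<Sum>i\<in>S'-{k}. coef S' k i *\<^sub>R N i)"
        unfolding coef_def by (rule someI_ex[where P="\<lambda>a. N k = (\<Sum>i\<in>S'-{k}. a i *\<^sub>R N i)", OF ex])
      have "c k = N k \<bullet> x" using xe k by simp
      also have "\<dots> = (\<Sum>i\<in>S'-{k}. coef S' k i * (N i \<bullet> x))"
        by (subst co) (simp add: inner_sum_left)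
      also have "\<dots> = (\<Sum>i\<in>S'-{k}. coef S' k i * c i)"
        using xe S'k by (intro sum.cong) auto
      finally have ck: "c k = (\<Sum>i\<in>S'-{k}. coef S' k i * c i)" .
      have mem: "S' \<in> {S. S \<subseteq> {..k} \<and> k \<in> S \<and> N k \<in> span (N ` (S-{k}))}"
        using sp' k unfolding S'_def by auto
      have "c k \<in> F k c" unfolding F_def using ck mem by (rule image_eqI)
      moreover have "k < M" using S k by auto
      ultimately show False using c by blast
    qed
    have ii: "inj_on N S \<and> independent (N ` S)" using indep_of_chain[OF fS chain] .
    have "dim (N ` S) = card S" using dim_card_iff[OF fS] ii by blast
    then show "aff_dim (\<Inter>i\<in>S. hyp (N i, c i)) = int DIM('a) - int (card S)"
      using aff_dim_hyps[OF x] by simp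
  qed
  then show ?thesis using c by blast
qed

lemma generic_mono:
  "generic_intersections A I \<Longrightarrow> J \<subseteq> I \<Longrightarrow> generic_intersections A J"
  unfolding generic_intersections_def by blast

lemma generic_reindex:
  fixes G :: "'j \<Rightarrow> 'a::euclidean_space \<times> real" and A :: "'i \<Rightarrow> 'a \<times> real"
  assumes g: "generic_intersections G J" and b: "bij_betw \<phi> J I" and e: "\<forall>k\<in>J. A (\<phi> k) = G k"
  shows "generic_intersections A I"
  unfolding generic_intersections_def
proof (intro allI impI)
  fix S assume S: "S \<subseteq> I" and ne: "(\<Inter>i\<in>S. hyp (A i)) \<noteq> {}"
  define S' where "S' = {k\<in>J. \<phi> k \<in> S}"
  have im: "\<phi> ` S' = S" using b S unfolding S'_def bij_betw_def by auto
  have inj: "inj_on \<phi> S'" using b unfolding bij_betw_def S'_def by (auto intro: inj_on_subset)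
  have cd: "card S' = card S" using card_image[OF inj] im by simp
  have "(\<Inter>i\<in>S. hyp (A i)) = (\<Inter>k\<in>S'. hyp (A (\<phi> k)))"
    unfolding im[symmetric] by simp
  also have "\<dots> = (\<Inter>k\<in>S'. hyp (G k))" using e unfolding S'_def by auto
  finally have eq: "(\<Inter>i\<in>S. hyp (A i)) = (\<Inter>k\<in>S'. hyp (G k))" .
  have "S' \<subseteq> J" unfolding S'_def by auto
  then have "aff_dim (\<Inter>k\<in>S'. hyp (G k)) = int DIM('a) - int (card S')"
    using g ne eq unfolding generic_intersections_def by auto
  then show "aff_dim (\<Inter>i\<in>S. hyp (A i)) = int DIM('a) - int (card S)" using eq cd by simp
qed
lemma pos_lb:
  fixes S :: "real set"
  assumes "finite S" "\<forall>x\<in>S. 0 < x"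
  shows "\<exists>e>0. \<forall>x\<in>S. e \<le> x"
proof -
  have "0 < Min (insert 1 S)" using assms by (simp add: Min_gr_iff)
  moreover have "\<forall>x\<in>S. Min (insert 1 S) \<le> x" using assms by (auto intro: Min_le)
  ultimately show ?thesis by blast
qed

theorem lemma7p3:
  fixes n :: nat and C :: "nat set set"
    and H :: "nat \<Rightarrow> 'a::euclidean_space \<times> real" and X :: "'a set"
  assumes "stable_pair n H X" and "C = hcode n H X"
  shows "\<exists>(H' :: nat \<Rightarrow> 'a \<times> real) (m :: nat) (B :: nat \<Rightarrow> 'a \<times> real).
           (\<forall>j\<in>{1..m}. valid_hyp (B j)) \<and>
           bounded (\<Inter>j\<in>{1..m}. hpos (B j)) \<and>
           stable_pair n H' (\<Inter>j\<in>{1..m}. hpos (B j)) \<and>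
           C = hcode n H' (\<Inter>j\<in>{1..m}. hpos (B j)) \<and>
           generic_intersections (join_fam H' B) (Inl ` {1..n} \<union> Inr ` {1..m})"
proof -
  note st = assms(1)
  have Cdef: "C = hcode n H X" by (rule assms(2))
  have stX: "open X" "convex X" and stv: "\<forall>i\<in>{1..n}. valid_hyp (H i)"
    using st unfolding stable_pair_def by auto
  have Csub: "\<forall>\<sigma>\<in>C. \<sigma> \<subseteq> {1..n}" using Cdef unfolding hcode_def by blast
  have wit: "\<forall>\<sigma>\<in>C. \<exists>p. p \<in> X \<and> (\<forall>i\<in>\<sigma>. snd (H i) < fst (H i) \<bullet> p) \<and> (\<forall>j\<in>{1..n}-\<sigma>. fst (H j) \<bullet> p < snd (H j))"
  proof
    fix \<sigma> assume \<sigma>C: "\<sigma> \<in> C"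
    then have \<sigma>: "\<sigma> \<subseteq> {1..n}" using Csub by blast
    have "(X \<inter> (\<Inter>i\<in>\<sigma>. hpos (H i))) - (\<Union>j\<in>{1..n} - \<sigma>. hpos (H j)) \<noteq> {}"
      using \<sigma>C Cdef unfolding hcode_def by blast
    then obtain q where q: "q \<in> X" "\<forall>i\<in>\<sigma>. q \<in> hpos (H i)" "\<forall>j\<in>{1..n}-\<sigma>. q \<notin> hpos (H j)" by blast
    have ge: "\<forall>i\<in>\<sigma>. snd (H i) \<le> fst (H i) \<bullet> q" using q(2) by (auto simp: hpos_def)
    have le: "\<forall>j\<in>{1..n}-\<sigma>. fst (H j) \<bullet> q \<le> snd (H j)"
    proof
      fix j assume j: "j \<in> {1..n}-\<sigma>"
      have "q \<notin> hpos (H j)" using bspec[OF q(3) j] .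
      then show "fst (H j) \<bullet> q \<le> snd (H j)" by (simp add: hpos_def)
    qed
    show "\<exists>p. p \<in> X \<and> (\<forall>i\<in>\<sigma>. snd (H i) < fst (H i) \<bullet> p) \<and> (\<forall>j\<in>{1..n}-\<sigma>. fst (H j) \<bullet> p < snd (H j))"
      using perturb_point[OF st q(1) \<sigma> ge le] by blast
  qed
  obtain p where p: "\<forall>\<sigma>\<in>C. p \<sigma> \<in> X \<and> (\<forall>i\<in>\<sigma>. snd (H i) < fst (H i) \<bullet> p \<sigma>) \<and> (\<forall>j\<in>{1..n}-\<sigma>. fst (H j) \<bullet> p \<sigma> < snd (H j))"
    using bchoice[OF wit] by blast
  have finC: "finite C"
  proof (rule finite_subset)
    show "C \<subseteq> Pow {1..n}" using Csub by blast
  qed simp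
  define W where "W = p ` C"
  have finW: "finite W" unfolding W_def using finC by simp
  have WX: "W \<subseteq> X" unfolding W_def using p by blast
  have nzS: "\<forall>x\<in>(\<lambda>(\<sigma>,k). \<bar>fst (H k) \<bullet> p \<sigma> - snd (H k)\<bar>) ` (C \<times> {1..n}). 0 < x"
  proof
    fix x assume "x \<in> (\<lambda>(\<sigma>,k). \<bar>fst (H k) \<bullet> p \<sigma> - snd (H k)\<bar>) ` (C \<times> {1..n})"
    then obtain \<sigma> k where sk: "\<sigma> \<in> C" "k \<in> {1..n}" "x = \<bar>fst (H k) \<bullet> p \<sigma> - snd (H k)\<bar>" by auto
    have "fst (H k) \<bullet> p \<sigma> \<noteq> snd (H k)"
    proof (cases "k \<in> \<sigma>")
      case True
      have "snd (H k) < fst (H k) \<bullet> p \<sigma>"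
        using bspec[OF conjunct1[OF conjunct2[OF bspec[OF p sk(1)]]] True] .
      then show ?thesis by simp
    next
      case False
      then have "k \<in> {1..n} - \<sigma>" using sk by blast
      have "fst (H k) \<bullet> p \<sigma> < snd (H k)"
        using bspec[OF conjunct2[OF conjunct2[OF bspec[OF p sk(1)]]] \<open>k \<in> {1..n} - \<sigma>\<close>] .
      then show ?thesis by simp
    qed
    then show "0 < x" using sk by simp
  qed
  obtain \<nu> where \<nu>: "\<nu> > 0" "\<forall>x\<in>(\<lambda>(\<sigma>,k). \<bar>fst (H k) \<bullet> p \<sigma> - snd (H k)\<bar>) ` (C \<times> {1..n}). \<nu> \<le> x"
    using pos_lb[OF _ nzS] finC by auto
  have \<nu>le: "\<nu> \<le> \<bar>fst (H k) \<bullet> p \<sigma> - snd (H k)\<bar>" if "\<sigma> \<in> C" "k \<in> {1..n}" for \<sigma> k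
  proof -
    have "\<bar>fst (H k) \<bullet> p \<sigma> - snd (H k)\<bar> \<in> (\<lambda>(\<sigma>,k). \<bar>fst (H k) \<bullet> p \<sigma> - snd (H k)\<bar>) ` (C \<times> {1..n})"
      using that by (intro image_eqI[of _ _ "(\<sigma>,k)"]) auto
    then show ?thesis using \<nu>(2) by blast
  qed
  have "\<forall>x\<in>W. \<exists>ab. cbox (fst ab) (snd ab) \<subseteq> X \<and> x \<in> box (fst ab) (snd ab)"
  proof
    fix x assume "x \<in> W"
    then have "x \<in> X" using WX by blast
    obtain a b where ab: "cbox a b \<subseteq> X" "x \<in> box a b" "\<forall>i\<in>Basis. a \<bullet> i < b \<bullet> i"
      by (rule open_contains_cbox[OF stX(1) \<open>x \<in> X\<close>])
    have "cbox (fst (a,b)) (snd (a,b)) \<subseteq> X \<and> x \<in> box (fst (a,b)) (snd (a,b))"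
      unfolding fst_conv snd_conv using ab by blast
    then show "\<exists>ab. cbox (fst ab) (snd ab) \<subseteq> X \<and> x \<in> box (fst ab) (snd ab)" by blast
  qed
  from bchoice[OF this] obtain bx where bx: "\<forall>x\<in>W. cbox (fst (bx x)) (snd (bx x)) \<subseteq> X \<and> x \<in> box (fst (bx x)) (snd (bx x))"
    by blast
  have "\<forall>x\<in>W. \<exists>V. finite V \<and> cbox (fst (bx x)) (snd (bx x)) = convex hull V"
    using polytope_interval unfolding polytope_def by blast
  from bchoice[OF this] obtain V where V: "\<forall>x\<in>W. finite (V x) \<and> cbox (fst (bx x)) (snd (bx x)) = convex hull (V x)"
    by blast
  define K where "K = convex hull (\<Union>x\<in>W. V x)"
  have finU: "finite (\<Union>x\<in>W. V x)" using finW V by (intro finite_UN_I) auto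
  have Kc: "compact K" unfolding K_def by (intro compact_convex_hull finite_imp_compact finU)
  have KX: "K \<subseteq> X" unfolding K_def
  proof (rule hull_minimal)
    show "(\<Union>x\<in>W. V x) \<subseteq> X"
    proof
      fix y assume "y \<in> (\<Union>x\<in>W. V x)"
      then obtain x where x: "x \<in> W" "y \<in> V x" by blast
      have "y \<in> convex hull (V x)" using x(2) by (rule hull_inc)
      moreover have "convex hull (V x) = cbox (fst (bx x)) (snd (bx x))" using V x(1) by blast
      moreover have "cbox (fst (bx x)) (snd (bx x)) \<subseteq> X" using bx x(1) by blast
      ultimately show "y \<in> X" by blast
    qed
  qed (rule stX(2))
  have Wint: "x \<in> interior K" if x: "x \<in> W" for x
  proof -
    have "box (fst (bx x)) (snd (bx x)) \<subseteq> cbox (fst (bx x)) (snd (bx x))" by (rule box_subset_cbox)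
    also have "\<dots> = convex hull (V x)" using V x by blast
    also have "\<dots> \<subseteq> K" unfolding K_def using x by (intro hull_mono) blast
    finally have "box (fst (bx x)) (snd (bx x)) \<subseteq> interior K" by (rule interior_maximal) (rule open_box)
    then show ?thesis using bx x by blast
  qed
  have "polyhedron K" unfolding K_def by (rule polyhedron_convex_hull[OF finU])
  then obtain F where F: "finite F" "K = \<Inter>F" "\<forall>h\<in>F. \<exists>a b. a \<noteq> 0 \<and> h = {x. a \<bullet> x \<le> b}"
    unfolding polyhedron_def by blast
  define m where "m = card F"
  obtain g where g: "bij_betw g {1..m} F" using ex_bij_betw_nat_finite_1[OF F(1)] unfolding m_def by blast
  have "\<forall>j\<in>{1..m}. \<exists>ab. fst ab \<noteq> 0 \<and> g j = {x. fst ab \<bullet> x \<le> snd ab}"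
  proof
    fix j assume "j \<in> {1..m}"
    then have "g j \<in> F" using bij_betw_apply[OF g] by blast
    then obtain a b where "a \<noteq> 0" "g j = {x. a \<bullet> x \<le> b}" using F(3) by blast
    then show "\<exists>ab. fst ab \<noteq> 0 \<and> g j = {x. fst ab \<bullet> x \<le> snd ab}" by (intro exI[of _ "(a,b)"]) simp
  qed
  from bchoice[OF this] obtain ab where ab: "\<forall>j\<in>{1..m}. fst (ab j) \<noteq> 0 \<and> g j = {x. fst (ab j) \<bullet> x \<le> snd (ab j)}"
    by blast
  define ha where "ha j = fst (ab j)" for j
  define hb where "hb j = snd (ab j)" for j
  have ha0: "\<forall>j\<in>{1..m}. ha j \<noteq> 0" using ab unfolding ha_def by blast
  have Keq: "K = (\<Inter>j\<in>{1..m}. {x. ha j \<bullet> x \<le> hb j})"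
  proof -
    have "K = \<Inter>(g ` {1..m})" using F(2) bij_betw_imp_surj_on[OF g] by simp
    also have "\<dots> = (\<Inter>j\<in>{1..m}. {x. ha j \<bullet> x \<le> hb j})"
      using ab unfolding ha_def hb_def by (intro INF_cong) auto
    finally show ?thesis .
  qed
  have Wlt: "ha j \<bullet> x < hb j" if "x \<in> W" "j \<in> {1..m}" for x j
  proof -
    have "K \<subseteq> {x. ha j \<bullet> x \<le> hb j}" using Keq that(2) by blast
    then have "interior K \<subseteq> interior {x. ha j \<bullet> x \<le> hb j}" by (rule interior_mono)
    also have "\<dots> = {x. ha j \<bullet> x < hb j}" using ha0 that(2) by simp
    finally show ?thesis using Wint[OF that(1)] by blast
  qed
  have posS: "\<forall>y\<in>(\<lambda>(x,j). hb j - ha j \<bullet> x) ` (W \<times> {1..m}). 0 < y" using Wlt by auto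
  obtain \<mu> where \<mu>: "\<mu> > 0" "\<forall>y\<in>(\<lambda>(x,j). hb j - ha j \<bullet> x) ` (W \<times> {1..m}). \<mu> \<le> y"
    using pos_lb[OF _ posS] finW by auto
  have \<mu>le: "\<mu> \<le> hb j - ha j \<bullet> x" if "x \<in> W" "j \<in> {1..m}" for x j
  proof -
    have "hb j - ha j \<bullet> x \<in> (\<lambda>(x,j). hb j - ha j \<bullet> x) ` (W \<times> {1..m})"
      using that by (intro image_eqI[of _ _ "(x,j)"]) auto
    then show ?thesis using \<mu>(2) by blast
  qed
  obtain \<epsilon>0 where \<epsilon>0: "\<epsilon>0 > 0" "\<forall>\<delta>. (\<forall>k\<in>{1..n}. \<bar>\<delta> k\<bar> < \<epsilon>0) \<longrightarrow>
           (\<forall>y\<in>K. {k\<in>{1..n}. snd (H k) + \<delta> k < fst (H k) \<bullet> y} \<in> hcode n H X)"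
    using compact_code[OF st Kc KX] by blast
  define \<epsilon> where "\<epsilon> = min \<epsilon>0 \<nu>"
  have epos: "\<epsilon> > 0" unfolding \<epsilon>_def using \<epsilon>0(1) \<nu>(1) by simp
  define N where "N k = (if k \<le> n then fst (H k) else - ha (k - n))" for k
  define lo where "lo k = (if k \<le> n then snd (H k) - \<epsilon> else - hb (k - n))" for k
  define hi where "hi k = (if k \<le> n then snd (H k) + \<epsilon> else - hb (k - n) + \<mu>)" for k
  have lh: "\<forall>k. lo k < hi k" unfolding lo_def hi_def using epos \<mu>(1) by simp
  obtain c where c: "\<forall>k<n+m+1. lo k < c k \<and> c k < hi k"
    and gen: "generic_intersections (\<lambda>k. (N k, c k)) {..<n+m+1}"
    using generic_choice[OF lh] by blast
  have gen2: "generic_intersections (\<lambda>k. (N k, c k)) {1..n+m}" by (rule generic_mono[OF gen]) auto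
  define H' where "H' i = (fst (H i), c i)" for i
  define B where "B j = (- ha j, c (n + j))" for j
  define P where "P = (\<Inter>j\<in>{1..m}. hpos (B j))"
  have hposB: "hpos (B j) = {x. ha j \<bullet> x < - c (n+j)}" for j by (auto simp: hpos_def B_def)
  have cB: "hb j - \<mu> < - c (n+j) \<and> - c (n+j) < hb j" if "j \<in> {1..m}" for j
  proof -
    have a: "n + j < n+m+1" "\<not> n + j \<le> n" using that by auto
    have "lo (n+j) < c (n+j) \<and> c (n+j) < hi (n+j)" using c a(1) by blast
    then show ?thesis using a(2) unfolding lo_def hi_def by simp
  qed
  have cH: "\<bar>c i - snd (H i)\<bar> < \<epsilon>" if "i \<in> {1..n}" for i
  proof -
    have a: "i < n+m+1" "i \<le> n" using that by auto
    have "lo i < c i \<and> c i < hi i" using c a(1) by blast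
    then show ?thesis using a(2) unfolding lo_def hi_def by (simp add: abs_less_iff)
  qed
  have PK: "P \<subseteq> K"
  proof
    fix x assume "x \<in> P"
    then have "\<forall>j\<in>{1..m}. ha j \<bullet> x < - c (n+j)" unfolding P_def hposB by blast
    then have "\<forall>j\<in>{1..m}. ha j \<bullet> x \<le> hb j" using cB by (meson less_imp_le order.strict_trans)
    then show "x \<in> K" unfolding Keq by blast
  qed
  have WP: "W \<subseteq> P"
  proof
    fix x assume x: "x \<in> W"
    have "\<forall>j\<in>{1..m}. ha j \<bullet> x < - c (n+j)"
    proof
      fix j assume j: "j \<in> {1..m}"
      show "ha j \<bullet> x < - c (n+j)" using \<mu>le[OF x j] cB[OF j] by linarith
    qed
    then show "x \<in> P" unfolding P_def hposB by blast
  qed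
  have hposH': "hpos (H' i) = {x. c i < fst (H i) \<bullet> x}" for i by (auto simp: hpos_def H'_def)
  have NH: "(N i, c i) = H' i" if "i \<le> n" for i using that unfolding N_def H'_def by simp
  define \<phi> where "\<phi> k = (if k \<le> n then Inl k else Inr (k - n))" for k :: nat
  have bij: "bij_betw \<phi> {1..n+m} (Inl ` {1..n} \<union> Inr ` {1..m})"
    unfolding bij_betw_def
  proof
    show "inj_on \<phi> {1..n+m}" unfolding inj_on_def \<phi>_def by (auto split: if_splits)
    show "\<phi> ` {1..n+m} = Inl ` {1..n} \<union> Inr ` {1..m}"
    proof
      show "\<phi> ` {1..n+m} \<subseteq> Inl ` {1..n} \<union> Inr ` {1..m}"
      proof
        fix z assume "z \<in> \<phi> ` {1..n+m}"
        then obtain k where k: "k \<in> {1..n+m}" "z = \<phi> k" by blast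
        show "z \<in> Inl ` {1..n} \<union> Inr ` {1..m}"
        proof (cases "k \<le> n")
          case True then show ?thesis using k by (simp add: \<phi>_def)
        next
          case False
          then have "k - n \<in> {1..m}" using k by auto
          then show ?thesis using k False by (simp add: \<phi>_def)
        qed
      qed
      show "Inl ` {1..n} \<union> Inr ` {1..m} \<subseteq> \<phi> ` {1..n+m}"
      proof
        fix z assume "z \<in> Inl ` {1..n} \<union> Inr ` {1..m}"
        then consider i where "i\<in>{1..n}" "z = Inl i" | j where "j\<in>{1..m}" "z = Inr j" by blast
        then show "z \<in> \<phi> ` {1..n+m}"
        proof cases
          case 1 then show ?thesis by (intro image_eqI[of _ _ i]) (auto simp: \<phi>_def)
        next
          case 2 then show ?thesis by (intro image_eqI[of _ _ "n+j"]) (auto simp: \<phi>_def)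
        qed
      qed
    qed
  qed
  have jeq: "\<forall>k\<in>{1..n+m}. join_fam H' B (\<phi> k) = (\<lambda>k. (N k, c k)) k"
  proof
    fix k assume k: "k \<in> {1..n+m}"
    show "join_fam H' B (\<phi> k) = (\<lambda>k. (N k, c k)) k"
    proof (cases "k \<le> n")
      case True then show ?thesis by (simp add: \<phi>_def join_fam_def H'_def N_def)
    next
      case False
      then have "n + (k - n) = k" by simp
      then show ?thesis using False by (simp add: \<phi>_def join_fam_def B_def N_def)
    qed
  qed
  have genJ: "generic_intersections (join_fam H' B) (Inl ` {1..n} \<union> Inr ` {1..m})"
    by (rule generic_reindex[OF gen2 bij jeq])
  have stP: "stable_pair n H' P"
    unfolding stable_pair_def
  proof (intro conjI allI impI)
    show "\<forall>i\<in>{1..n}. valid_hyp (H' i)" using stv by (simp add: valid_hyp_def H'_def)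
    show "open P" unfolding P_def hposB by (intro open_INT ballI open_halfspace_lt) simp
    show "convex P" unfolding P_def hposB by (intro convex_INT convex_halfspace_lt)
  next
    fix \<sigma> assume \<sigma>: "\<sigma> \<subseteq> {1..n}" and ne: "P \<inter> (\<Inter>i\<in>\<sigma>. hyp (H' i)) \<noteq> {}"
    have eq: "(\<Inter>i\<in>\<sigma>. hyp (H' i)) = (\<Inter>i\<in>\<sigma>. hyp ((\<lambda>k. (N k, c k)) i))"
      using \<sigma> NH by (intro INF_cong) auto
    have "\<sigma> \<subseteq> {1..n+m}" using \<sigma> by auto
    moreover have "(\<Inter>i\<in>\<sigma>. hyp ((\<lambda>k. (N k, c k)) i)) \<noteq> {}" using ne eq by blast
    ultimately have "aff_dim (\<Inter>i\<in>\<sigma>. hyp ((\<lambda>k. (N k, c k)) i)) = int DIM('a) - int (card \<sigma>)"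
      using gen2 unfolding generic_intersections_def by blast
    then show "aff_dim (\<Inter>i\<in>\<sigma>. hyp (H' i)) = int DIM('a) - int (card \<sigma>)" using eq by simp
  qed
  have code: "C = hcode n H' P"
  proof
    show "C \<subseteq> hcode n H' P"
    proof
      fix \<sigma> assume \<sigma>C: "\<sigma> \<in> C"
      have \<sigma>: "\<sigma> \<subseteq> {1..n}" using Csub \<sigma>C by blast
      have pP: "p \<sigma> \<in> P" using WP \<sigma>C unfolding W_def by blast
      have pos: "p \<sigma> \<in> hpos (H' i)" if i: "i \<in> \<sigma>" for i
      proof -
        have i1: "i \<in> {1..n}" using i \<sigma> by blast
        have "snd (H i) < fst (H i) \<bullet> p \<sigma>" using p \<sigma>C i by blast
        moreover note \<nu>le[OF \<sigma>C i1] cH[OF i1]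
        moreover have "\<epsilon> \<le> \<nu>" unfolding \<epsilon>_def by simp
        ultimately have "c i < fst (H i) \<bullet> p \<sigma>" by (simp add: abs_if split: if_splits)
        then show ?thesis unfolding hposH' by simp
      qed
      have neg: "p \<sigma> \<notin> hpos (H' j)" if j: "j \<in> {1..n} - \<sigma>" for j
      proof -
        have j1: "j \<in> {1..n}" using j by blast
        have "fst (H j) \<bullet> p \<sigma> < snd (H j)" using bspec[OF conjunct2[OF conjunct2[OF bspec[OF p \<sigma>C]]] j] .
        moreover note \<nu>le[OF \<sigma>C j1] cH[OF j1]
        moreover have "\<epsilon> \<le> \<nu>" unfolding \<epsilon>_def by simp
        ultimately have "fst (H j) \<bullet> p \<sigma> \<le> c j" by (simp add: abs_if split: if_splits)
        then show ?thesis unfolding hposH' by simp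
      qed
      have "p \<sigma> \<in> (P \<inter> (\<Inter>i\<in>\<sigma>. hpos (H' i))) - (\<Union>j\<in>{1..n} - \<sigma>. hpos (H' j))"
        using pP pos neg by blast
      then show "\<sigma> \<in> hcode n H' P" unfolding hcode_def using \<sigma> by blast
    qed
    show "hcode n H' P \<subseteq> C"
    proof
      fix \<tau> assume \<tau>C: "\<tau> \<in> hcode n H' P"
      then have \<tau>: "\<tau> \<subseteq> {1..n}" unfolding hcode_def by blast
      have "(P \<inter> (\<Inter>i\<in>\<tau>. hpos (H' i))) - (\<Union>j\<in>{1..n} - \<tau>. hpos (H' j)) \<noteq> {}"
        using \<tau>C unfolding hcode_def by blast
      then obtain y where y: "y \<in> P" "\<forall>i\<in>\<tau>. y \<in> hpos (H' i)" "\<forall>j\<in>{1..n}-\<tau>. y \<notin> hpos (H' j)" by blast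
      define \<delta> where "\<delta> k = c k - snd (H k)" for k
      have "\<forall>k\<in>{1..n}. \<bar>\<delta> k\<bar> < \<epsilon>0"
      proof
        fix k assume "k \<in> {1..n}"
        then have "\<bar>\<delta> k\<bar> < \<epsilon>" using cH unfolding \<delta>_def by blast
        moreover have "\<epsilon> \<le> \<epsilon>0" unfolding \<epsilon>_def by simp
        ultimately show "\<bar>\<delta> k\<bar> < \<epsilon>0" by simp
      qed
      then have inC: "{k\<in>{1..n}. snd (H k) + \<delta> k < fst (H k) \<bullet> y} \<in> hcode n H X"
        using \<epsilon>0(2) y(1) PK by blast
      have "{k\<in>{1..n}. snd (H k) + \<delta> k < fst (H k) \<bullet> y} = \<tau>"
      proof (rule set_eqI)
        fix k
        show "k \<in> {k\<in>{1..n}. snd (H k) + \<delta> k < fst (H k) \<bullet> y} \<longleftrightarrow> k \<in> \<tau>"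
        proof (cases "k \<in> \<tau>")
          case True
          then show ?thesis using y(2) \<tau> unfolding hposH' \<delta>_def by auto
        next
          case False
          show ?thesis
          proof (cases "k \<in> {1..n}")
            case True
            then have "k \<in> {1..n} - \<tau>" using False by blast
            then have "y \<notin> hpos (H' k)" using y(3) by blast
            then show ?thesis using False unfolding hposH' \<delta>_def by auto
          next
            case False
            then show ?thesis using \<tau> by auto
          qed
        qed
      qed
      then show "\<tau> \<in> C" using inC Cdef by simp
    qed
  qed
  have vB: "\<forall>j\<in>{1..m}. valid_hyp (B j)" using ha0 by (simp add: valid_hyp_def B_def)
  have bP: "bounded P" using bounded_subset[OF compact_imp_bounded[OF Kc] PK] .
  have all: "(\<forall>j\<in>{1..m}. valid_hyp (B j)) \<and> bounded P \<and> stable_pair n H' P \<and> C = hcode n H' P \<and>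
     generic_intersections (join_fam H' B) (Inl ` {1..n} \<union> Inr ` {1..m})"
    using vB bP stP code genJ by blast
  from all show ?thesis unfolding P_def by blast
qed

end
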